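(* Assume the Setting below together with (A-sub), (A-outer), (A-sing). Let $\hat{\mathcal P}$ be any affine subspace of $\mathbb R^d$ and $\hat\mu_{\mathcal H}=\frac1{|\mathcal H|}\sum_{i\in\mathcal H}\Pi_{\hat{\mathcal P}}(g_i)$. Then $$\|\hat\mu_{\mathcal H}-\mathbb E\mu\|_2^2\le\frac2{|\mathcal H|}\sum_{i\in\mathcal H}\|g_i-\mathbb Eg_i\|_2^2+4\Big(\frac1{n-2f}+\frac{\delta^2}{\sigma^2}\Big)\Big(\ell_t(\hat{\mathcal P})+\sum_{i\in\mathcal H}\|g_i-\mathbb Eg_i\|_2^2\Big).$$ Consequently, if $\mathbb E\|g_i-\mathbb Eg_i\|_2^2\le\epsilon^2$ for all $i\in\mathcal H$, then $\mathbb E\|\hat\mu_{\mathcal H}-\mathbb E\mu\|_2^2\le2\epsilon^2+4\big(\frac1{n-2f}+\frac{\delta^2}{\sigma^2}\big)\big(\mathbb E\ell_t(\hat{\mathcal P})+|\mathcal H|\epsilon^2\big)$.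
   Context: Setting: let $n,f,c,d$ be positive integers with $c\ge2$, $d\ge c$, $n-2f\ge1$. The index set $\{1,\dots,n\}$ is partitioned as $\mathcal H\sqcup\mathcal B$ (honest and Byzantine clients) with $|\mathcal B|\le f$. Each client $i$ has a vector $g_i\in\mathbb R^d$; for $i\in\mathcal H$, $\mathbb Eg_i\in\mathbb R^d$ denotes a fixed vector (the expectation of $g_i$), and $\mathbb E\mu=\frac1{|\mathcal H|}\sum_{i\in\mathcal H}\mathbb Eg_i$. A $k$-dimensional affine subspace is $\mathcal P=\{U\lambda+m:\lambda\in\mathbb R^k\}$ with $U\in\mathbb R^{d\times k}$ having orthonormal columns and $m\in\mathbb R^d$; its orthogonal projection is $\Pi_{\mathcal P}(w)=UU^\top(w-m)+m$. The trimmed reconstruction loss of an affine subspace $\mathcal P$ is $\ell_t(\mathcal P)=\min_{S\subseteq\{1,\dots,n\},\,|S|=n-f}\sum_{i\in S}\|g_i-\Pi_{\mathcal P}(g_i)\|_2^2$. Assumptions: (A-sub) there is a $(c-1)$-dimensional affine subspace $\mathcal P^*$ containing $\mathbb Eg_i$ for all $i\in\mathcal H$; (A-outer) $\|\mathbb Eg_i-\mathbb E\mu\|_2\le\delta$ for all $i\in\mathcal H$; (A-sing) for every $S\subseteq\mathcal H$ with $|S|=n-2f$, the $d\times(n-2f)$ matrix with columns $\mathbb Eg_s-\frac1{n-2f}\sum_{s'\in S}\mathbb Eg_{s'}$ ($s\in S$) has $(c-1)$-th largest singular value at least $\sigma>0$. *)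

theory Defs
  imports "HOL-Analysis.Analysis" "HOL-Probability.Probability"
    "Jordan_Normal_Form.Char_Poly"
begin

(* An affine subspace of dimension k is given by k orthonormal vectors u 0, ..., u (k-1)
   (the columns of U) and an offset m. *)
definition orthonormal_cols :: "nat \<Rightarrow> (nat \<Rightarrow> 'v::real_inner) \<Rightarrow> bool" where
  "orthonormal_cols k u \<longleftrightarrow> (\<forall>j<k. \<forall>j'<k. u j \<bullet> u j' = (if j = j' then 1 else 0))"

definition affine_sub :: "nat \<Rightarrow> (nat \<Rightarrow> 'v::real_inner) \<Rightarrow> 'v \<Rightarrow> 'v set" where
  "affine_sub k u m = {(\<Sum>j<k. lam j *\<^sub>R u j) + m | lam. True}"

definition proj_aff :: "nat \<Rightarrow> (nat \<Rightarrow> 'v::real_inner) \<Rightarrow> 'v \<Rightarrow> 'v \<Rightarrow> 'v" where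
  "proj_aff k u m w = (\<Sum>j<k. (u j \<bullet> (w - m)) *\<^sub>R u j) + m"

definition trimmed_loss :: "nat \<Rightarrow> nat \<Rightarrow> (nat \<Rightarrow> 'v::real_inner) \<Rightarrow> nat \<Rightarrow> (nat \<Rightarrow> 'v) \<Rightarrow> 'v \<Rightarrow> real" where
  "trimmed_loss n f g k u m =
     Min {(\<Sum>i\<in>S. (norm (g i - proj_aff k u m (g i)))\<^sup>2) | S. S \<subseteq> {1..n} \<and> card S = n - f}"

(* For a matrix M whose columns are the vectors in the list vs, M^T M is the Gram matrix. *)
definition gram_mat :: "'v::real_inner list \<Rightarrow> real mat" where
  "gram_mat vs = mat (length vs) (length vs) (\<lambda>(i, j). vs ! i \<bullet> vs ! j)"

(* Singular values (with multiplicity, in decreasing order) of the matrix with columns vs: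
   square roots of the eigenvalues of M^T M, i.e. of the roots of its characteristic polynomial. *)
definition singular_values_desc :: "'v::real_inner list \<Rightarrow> real list" where
  "singular_values_desc vs =
     rev (sorted_list_of_multiset (image_mset sqrt (proots (char_poly (gram_mat vs)))))"

(* k-th largest singular value (1-indexed); 0 if k exceeds the number of columns *)
definition kth_singular_value :: "nat \<Rightarrow> 'v::real_inner list \<Rightarrow> real" where
  "kth_singular_value k vs =
     (if 1 \<le> k \<and> k \<le> length (singular_values_desc vs) then singular_values_desc vs ! (k - 1) else 0)"

end

theory Submission
  imports Defs
begin


lemma pconst_sum: "[:sum f A:] = (\<Sum>x\<in>A. [:f x:])"
proof (induct A rule: infinite_finite_induct)
  case (insert a F)
  have "[:f a + sum f F:] = [:f a:] + [:sum f F:]" by (simp add: add_pCons[symmetric])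
  then show ?case using insert by simp
qed auto

lemma charpoly_identity:
  fixes B :: "real mat" assumes B: "B \<in> carrier_mat k t"
  shows "[:0,1:]^t * char_poly (B * transpose_mat B) = [:0,1:]^k * char_poly (transpose_mat B * B)"
proof -
  define x :: "real poly" where "x = [:0,1:]"
  define Bp where "Bp = map_mat (\<lambda>a. [:a:]) B"
  define BpT where "BpT = map_mat (\<lambda>a. [:a:]) (transpose_mat B)"
  have Bp: "Bp \<in> carrier_mat k t" and BpT: "BpT \<in> carrier_mat t k" using B by (auto simp: Bp_def BpT_def)
  define M where "M = four_block_mat (x \<cdot>\<^sub>m 1\<^sub>m k) Bp BpT (1\<^sub>m t)"
  define L1 where "L1 = four_block_mat (1\<^sub>m k) (0\<^sub>m k t) (- BpT) (x \<cdot>\<^sub>m 1\<^sub>m t)"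
  define L2 where "L2 = four_block_mat (1\<^sub>m k) (- Bp) (0\<^sub>m t k) (1\<^sub>m t)"
  have M: "M \<in> carrier_mat (k+t) (k+t)" unfolding M_def using Bp BpT by auto
  have L1: "L1 \<in> carrier_mat (k+t) (k+t)" unfolding L1_def using Bp BpT by auto
  have L2: "L2 \<in> carrier_mat (k+t) (k+t)" unfolding L2_def using Bp BpT by auto
  have "L1 * M = four_block_mat (1\<^sub>m k * (x \<cdot>\<^sub>m 1\<^sub>m k) + 0\<^sub>m k t * BpT) (1\<^sub>m k * Bp + 0\<^sub>m k t * 1\<^sub>m t)
      (- BpT * (x \<cdot>\<^sub>m 1\<^sub>m k) + (x \<cdot>\<^sub>m 1\<^sub>m t) * BpT) (- BpT * Bp + (x \<cdot>\<^sub>m 1\<^sub>m t) * 1\<^sub>m t)"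
    unfolding L1_def M_def by (rule mult_four_block_mat, insert Bp BpT, auto)
  also have "\<dots> = four_block_mat (x \<cdot>\<^sub>m 1\<^sub>m k) Bp (0\<^sub>m t k) (char_poly_matrix (transpose_mat B * B))"
  proof -
    have e1: "1\<^sub>m k * (x \<cdot>\<^sub>m 1\<^sub>m k) + 0\<^sub>m k t * BpT = x \<cdot>\<^sub>m 1\<^sub>m k" using BpT by simp
    have e2: "1\<^sub>m k * Bp + 0\<^sub>m k t * 1\<^sub>m t = Bp" using Bp by simp
    have e3: "- BpT * (x \<cdot>\<^sub>m 1\<^sub>m k) + (x \<cdot>\<^sub>m 1\<^sub>m t) * BpT = 0\<^sub>m t k"
      by (rule eq_matI, insert BpT, auto simp: scalar_prod_def if_distrib if_distribR sum.delta sum.delta' cong: if_cong)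
    have e4: "- BpT * Bp + (x \<cdot>\<^sub>m 1\<^sub>m t) * 1\<^sub>m t = char_poly_matrix (transpose_mat B * B)"
      by (rule eq_matI, insert B Bp BpT, auto simp: scalar_prod_def char_poly_matrix_def Bp_def BpT_def x_def pconst_sum[symmetric] mult.commute)
    show ?thesis using e1 e2 e3 e4 by simp
  qed
  finally have P1: "L1 * M = four_block_mat (x \<cdot>\<^sub>m 1\<^sub>m k) Bp (0\<^sub>m t k) (char_poly_matrix (transpose_mat B * B))" .
  have "L2 * M = four_block_mat (1\<^sub>m k * (x \<cdot>\<^sub>m 1\<^sub>m k) + - Bp * BpT) (1\<^sub>m k * Bp + - Bp * 1\<^sub>m t)
      (0\<^sub>m t k * (x \<cdot>\<^sub>m 1\<^sub>m k) + 1\<^sub>m t * BpT) (0\<^sub>m t k * Bp + 1\<^sub>m t * 1\<^sub>m t)"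
    unfolding L2_def M_def by (rule mult_four_block_mat, insert Bp BpT, auto)
  also have "\<dots> = four_block_mat (char_poly_matrix (B * transpose_mat B)) (0\<^sub>m k t) BpT (1\<^sub>m t)"
  proof -
    have e1: "1\<^sub>m k * (x \<cdot>\<^sub>m 1\<^sub>m k) + - Bp * BpT = char_poly_matrix (B * transpose_mat B)"
      by (rule eq_matI, insert B Bp BpT, auto simp: scalar_prod_def char_poly_matrix_def Bp_def BpT_def x_def pconst_sum[symmetric] mult.commute)
    have e2: "1\<^sub>m k * Bp + - Bp * 1\<^sub>m t = 0\<^sub>m k t" using Bp by (intro eq_matI) auto
    have e3: "0\<^sub>m t k * (x \<cdot>\<^sub>m 1\<^sub>m k) + 1\<^sub>m t * BpT = BpT" using BpT by simp
    have e4: "0\<^sub>m t k * Bp + 1\<^sub>m t * 1\<^sub>m t = 1\<^sub>m t" using Bp by simp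
    show ?thesis using e1 e2 e3 e4 by simp
  qed
  finally have P2: "L2 * M = four_block_mat (char_poly_matrix (B * transpose_mat B)) (0\<^sub>m k t) BpT (1\<^sub>m t)" .
  have dL1: "det L1 = x ^ t" unfolding L1_def
    by (subst det_four_block_mat_upper_right_zero[of _ k _ t], insert BpT, auto)
  have dL2: "det L2 = 1" unfolding L2_def
    by (subst det_four_block_mat_lower_left_zero[of _ k _ t], insert Bp, auto)
  have "det (L1 * M) = x ^ k * char_poly (transpose_mat B * B)" unfolding P1 char_poly_def
    by (subst det_four_block_mat_lower_left_zero[of _ k _ t], insert Bp B, auto)
  moreover have "det (L1 * M) = x ^ t * det M" using det_mult[OF L1 M] dL1 by simp
  moreover have "det M = char_poly (B * transpose_mat B)"
    using det_mult[OF L2 M] dL2 unfolding P2 char_poly_def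
    by (subst (asm) det_four_block_mat_upper_right_zero[of _ k _ t], insert B BpT, auto)
  ultimately show ?thesis unfolding x_def by simp
qed




lemma sv_count:
  assumes s: "\<sigma> > 0" and kv: "kth_singular_value k vs \<ge> \<sigma>"
  shows "k \<le> size (filter_mset (\<lambda>x. \<sigma>\<^sup>2 \<le> x) (proots (char_poly (gram_mat vs))))"
proof -
  define R where "R = proots (char_poly (gram_mat vs))"
  define L where "L = singular_values_desc vs"
  have L: "L = rev (sorted_list_of_multiset (image_mset sqrt R))"
    unfolding L_def R_def singular_values_desc_def by simp
  have kL: "1 \<le> k" "k \<le> length L" and Lk: "L ! (k - 1) \<ge> \<sigma>"
    using kv s unfolding kth_singular_value_def L_def[symmetric] by (auto split: if_splits)
  have sorted: "sorted (rev L)" unfolding L by simp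
  have desc: "L ! i \<ge> L ! j" if "i \<le> j" "j < length L" for i j
  proof -
    have "rev L ! (length L - 1 - j) \<le> rev L ! (length L - 1 - i)"
      using sorted that by (intro sorted_nth_mono) auto
    then show ?thesis using that by (simp add: rev_nth)
  qed
  have allge: "\<forall>y\<in>set (take k L). \<sigma> \<le> y"
  proof
    fix y assume "y \<in> set (take k L)"
    then obtain i where i: "i < k" "y = L ! i" using kL by (auto simp: in_set_conv_nth)
    have "L ! i \<ge> L ! (k - 1)" using desc[of i "k - 1"] i kL by auto
    then show "\<sigma> \<le> y" using Lk i by simp
  qed
  have "k = length (filter (\<lambda>y. \<sigma> \<le> y) (take k L))"
    using allge kL by (simp add: filter_True min_def)
  also have "\<dots> \<le> length (filter (\<lambda>y. \<sigma> \<le> y) L)"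
  proof -
    have "filter (\<lambda>y. \<sigma> \<le> y) L = filter (\<lambda>y. \<sigma> \<le> y) (take k L) @ filter (\<lambda>y. \<sigma> \<le> y) (drop k L)"
      by (metis append_take_drop_id filter_append)
    then show ?thesis by simp
  qed
  also have "\<dots> = size (filter_mset (\<lambda>y. \<sigma> \<le> y) (mset L))"
    by (metis mset_filter size_mset)
  also have "mset L = image_mset sqrt R" unfolding L by simp
  also have "filter_mset (\<lambda>y. \<sigma> \<le> y) (image_mset sqrt R) = image_mset sqrt (filter_mset (\<lambda>x. \<sigma> \<le> sqrt x) R)"
    by (simp add: image_mset_filter_mset_swap)
  also have "filter_mset (\<lambda>x. \<sigma> \<le> sqrt x) R = filter_mset (\<lambda>x. \<sigma>\<^sup>2 \<le> x) R"
  proof (rule filter_mset_cong)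
    fix x
    show "(\<sigma> \<le> sqrt x) = (\<sigma>\<^sup>2 \<le> x)"
    proof
      assume a: "\<sigma> \<le> sqrt x"
      then have "x > 0" using s by (metis not_less order_le_less_trans real_sqrt_le_0_iff)
      then show "\<sigma>\<^sup>2 \<le> x" using a s by (metis power_mono less_imp_le real_sqrt_pow2)
    next
      assume "\<sigma>\<^sup>2 \<le> x" then show "\<sigma> \<le> sqrt x" using s by (simp add: real_le_rsqrt)
    qed
  qed simp
  finally show ?thesis unfolding R_def by simp
qed

lemma roots_ge:
  fixes B :: "real mat"
  assumes B: "B \<in> carrier_mat k t" and s: "\<sigma> > 0"
    and cnt: "k \<le> size (filter_mset (\<lambda>x. \<sigma>\<^sup>2 \<le> x) (proots (char_poly (transpose_mat B * B))))"
  shows "\<forall>x\<in># proots (char_poly (B * transpose_mat B)). \<sigma>\<^sup>2 \<le> x"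
proof -
  define P where "P = (\<lambda>x::real. \<sigma>\<^sup>2 \<le> x)"
  define CG where "CG = char_poly (transpose_mat B * B)"
  define CK where "CK = char_poly (B * transpose_mat B)"
  have GC: "transpose_mat B * B \<in> carrier_mat t t" and KC: "B * transpose_mat B \<in> carrier_mat k k" using B by auto
  have mG: "monic CG" and dK: "degree CK = k" and mK: "monic CK"
    using degree_monic_char_poly[OF GC] degree_monic_char_poly[OF KC] unfolding CG_def CK_def by auto
  have CG0: "CG \<noteq> 0" and CK0: "CK \<noteq> 0" using mG mK by auto
  have id: "[:0,1:]^t * CK = [:0,1:]^k * CG" using charpoly_identity[OF B] unfolding CG_def CK_def .
  have rX: "proots ([:0,1:]^m :: real poly) = repeat_mset m {#0#}" for m
    by (simp add: proots_power)
  have fX: "filter_mset P (repeat_mset m {#0#}) = {#}" for m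
    using s unfolding P_def by (induct m) auto
  have X0: "([:0,1:]::real poly)^m \<noteq> 0" for m by simp
  have "filter_mset P (proots ([:0,1:]^t * CK)) = filter_mset P (proots CK)"
    using proots_mult[OF X0 CK0] rX fX by simp
  moreover have "filter_mset P (proots ([:0,1:]^k * CG)) = filter_mset P (proots CG)"
    using proots_mult[OF X0 CG0] rX fX by simp
  ultimately have eq: "filter_mset P (proots CK) = filter_mset P (proots CG)" using id by simp
  have "size (proots CK) \<le> k" using size_proots_le[of CK] dK by simp
  also have "k \<le> size (filter_mset P (proots CK))" using cnt eq unfolding P_def CG_def by simp
  finally have "size (proots CK) \<le> size (filter_mset P (proots CK))" .
  then have "filter_mset P (proots CK) = proots CK"
    by (metis multiset_filter_subset subset_mset.antisym mset_subset_eqD size_mset_mono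
        subset_mset.less_le not_less mset_subset_size)
  then show ?thesis unfolding P_def CK_def
    by (metis multiset_partition union_filter_mset_complement in_diffD
        filter_mset_eq_conv)
qed




lemma on_sum_delta:
  fixes u :: "nat \<Rightarrow> 'v::real_inner"
  assumes "orthonormal_cols k u" "i < k"
  shows "(\<Sum>j<k. (u i \<bullet> u j) *\<^sub>R u j) = u i"
proof -
  have "(\<Sum>j<k. (u i \<bullet> u j) *\<^sub>R u j) = (\<Sum>j<k. (if i = j then u j else 0))"
    using assms unfolding orthonormal_cols_def by (intro sum.cong) auto
  also have "\<dots> = u i" using assms(2) by (simp add: sum.delta)
  finally show ?thesis .
qed

lemma on_expand:
  fixes u :: "nat \<Rightarrow> 'v::real_inner"
  assumes on: "orthonormal_cols k u" and x: "x \<in> span (u ` {..<k})"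
  shows "x = (\<Sum>j<k. (x \<bullet> u j) *\<^sub>R u j)"
  using x
proof (induct rule: span_induct_alt)
  case base then show ?case by simp
next
  case (step c x y)
  then obtain i where i: "i < k" "x = u i" by auto
  have "(\<Sum>j<k. ((c *\<^sub>R x + y) \<bullet> u j) *\<^sub>R u j) = c *\<^sub>R (\<Sum>j<k. (u i \<bullet> u j) *\<^sub>R u j) + (\<Sum>j<k. (y \<bullet> u j) *\<^sub>R u j)"
    using i by (simp add: inner_add_left scaleR_add_left sum.distrib scaleR_sum_right)
  also have "\<dots> = c *\<^sub>R x + y" using on_sum_delta[OF on i(1)] step(2) i by simp
  finally show ?case by simp
qed

lemma on_inner:
  fixes u :: "nat \<Rightarrow> 'v::real_inner"
  assumes on: "orthonormal_cols k u" and x: "x \<in> span (u ` {..<k})"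
  shows "x \<bullet> y = (\<Sum>j<k. (x \<bullet> u j) * (u j \<bullet> y))"
proof -
  have "x \<bullet> y = (\<Sum>j<k. (x \<bullet> u j) *\<^sub>R u j) \<bullet> y" using on_expand[OF on x] by simp
  also have "\<dots> = (\<Sum>j<k. (x \<bullet> u j) * (u j \<bullet> y))" by (simp add: inner_sum_left)
  finally show ?thesis .
qed

lemma on_norm1: "orthonormal_cols k (u :: nat \<Rightarrow> 'v::real_inner) \<Longrightarrow> i < k \<Longrightarrow> norm (u i) = 1"
  unfolding orthonormal_cols_def by (metis norm_eq_sqrt_inner real_sqrt_one)

lemma quad_zero:
  fixes b c :: real
  assumes "\<forall>e. 0 \<le> 2 * e * b + e\<^sup>2 * c" "c \<ge> 0"
  shows "b = 0"
proof (rule ccontr)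
  assume b: "b \<noteq> 0"
  define e where "e = - b / (c + 1)"
  have c1: "c + 1 > 0" using assms by simp
  have eq: "(c + 1)\<^sup>2 * (2 * e * b + e\<^sup>2 * c) = b\<^sup>2 * (- c - 2)"
  proof -
    have ec: "e * (c + 1) = - b" unfolding e_def using c1 by simp
    have "(c + 1)\<^sup>2 * (2 * e * b + e\<^sup>2 * c) = 2 * b * (c + 1) * (e * (c + 1)) + (e * (c + 1))\<^sup>2 * c"
      by (simp add: power2_eq_square algebra_simps)
    also have "\<dots> = b\<^sup>2 * (- c - 2)" unfolding ec by (simp add: power2_eq_square algebra_simps)
    finally show ?thesis .
  qed
  have "b\<^sup>2 * (- c - 2) < 0" using b assms(2) by (intro mult_pos_neg) auto
  then have "(c + 1)\<^sup>2 * (2 * e * b + e\<^sup>2 * c) < 0" using eq by simp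
  then have "2 * e * b + e\<^sup>2 * c < 0" using c1 by (simp add: mult_less_0_iff)
  then show False using assms(1) by (meson not_le)
qed




lemma sv_bound:
  fixes u :: "nat \<Rightarrow> 'v::euclidean_space" and vs :: "'v list"
  assumes on: "orthonormal_cols k u" and k1: "k \<ge> 1"
    and vsW: "\<forall>s<length vs. vs ! s \<in> span (u ` {..<k})"
    and s: "\<sigma> > 0" and kv: "kth_singular_value k vs \<ge> \<sigma>"
    and z: "z \<in> span (u ` {..<k})"
  shows "\<sigma>\<^sup>2 * (norm z)\<^sup>2 \<le> (\<Sum>s<length vs. (vs ! s \<bullet> z)\<^sup>2)"
proof -
  define t where "t = length vs"
  define W where "W = span (u ` {..<k})"
  define B :: "real mat" where "B = mat k t (\<lambda>(j,s). vs ! s \<bullet> u j)"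
  have B: "B \<in> carrier_mat k t" unfolding B_def by simp
  have gram: "gram_mat vs = transpose_mat B * B"
  proof (rule eq_matI)
    fix i j assume ij: "i < dim_row (transpose_mat B * B)" "j < dim_col (transpose_mat B * B)"
    then have i: "i < t" and j: "j < t" using B by auto
    have "(transpose_mat B * B) $$ (i, j) = (\<Sum>l<k. (vs ! i \<bullet> u l) * (vs ! j \<bullet> u l))"
      using i j B by (simp add: scalar_prod_def B_def atLeast0LessThan)
    also have "\<dots> = vs ! i \<bullet> vs ! j"
      using on_inner[OF on, of "vs ! i" "vs ! j"] vsW i unfolding t_def by (simp add: inner_commute)
    finally show "gram_mat vs $$ (i, j) = (transpose_mat B * B) $$ (i, j)"
      using i j unfolding gram_mat_def t_def by simp
  qed (auto simp: gram_mat_def t_def B_def)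
  have roots: "\<forall>x\<in># proots (char_poly (B * transpose_mat B)). \<sigma>\<^sup>2 \<le> x"
    using roots_ge[OF B s] sv_count[OF s kv] gram by simp
  define F where "F = (\<lambda>z. \<Sum>s<t. (vs ! s \<bullet> z)\<^sup>2)"
  define Sph where "Sph = W \<inter> sphere 0 1"
  have subW: "subspace W" unfolding W_def by simp
  have cpt: "compact Sph" unfolding Sph_def
    by (rule closed_Int_compact[OF closed_subspace[OF subW] compact_sphere])
  have u0: "u 0 \<in> Sph" unfolding Sph_def W_def using on_norm1[OF on, of 0] k1
    by (auto intro: span_base)
  have cont: "continuous_on Sph F" unfolding F_def by (intro continuous_intros)
  obtain z0 where z0: "z0 \<in> Sph" and min: "\<forall>y\<in>Sph. F z0 \<le> F y"
    using continuous_attains_inf[OF cpt _ cont] u0 by blast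
  have z0W: "z0 \<in> W" and nz0: "norm z0 = 1" using z0 unfolding Sph_def by auto
  define s0 where "s0 = F z0"
  have Fscale: "F (c *\<^sub>R y) = c\<^sup>2 * F y" for c y
    unfolding F_def by (simp add: power_mult_distrib sum_distrib_left)
  have homog: "s0 * (norm y)\<^sup>2 \<le> F y" if y: "y \<in> W" for y
  proof (cases "y = 0")
    case True then show ?thesis unfolding F_def by simp
  next
    case False
    define y' where "y' = (1 / norm y) *\<^sub>R y"
    have "y' \<in> Sph" unfolding Sph_def y'_def using y False subW
      by (auto intro: subspace_scale)
    then have "s0 \<le> F y'" using min unfolding s0_def by auto
    also have "F y' = F y / (norm y)\<^sup>2" unfolding y'_def Fscale by (simp add: power_divide)
    finally show ?thesis using False by (simp add: pos_le_divide_eq)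
  qed
  have stat: "(\<Sum>s<t. (vs ! s \<bullet> z0) * (vs ! s \<bullet> w)) = s0 * (z0 \<bullet> w)" if w: "w \<in> W" for w
  proof -
    define b where "b = (\<Sum>s<t. (vs ! s \<bullet> z0) * (vs ! s \<bullet> w)) - s0 * (z0 \<bullet> w)"
    define c where "c = F w - s0 * (norm w)\<^sup>2"
    have c0: "c \<ge> 0" using homog[OF w] unfolding c_def by simp
    have "0 \<le> 2 * e * b + e\<^sup>2 * c" for e
    proof -
      have "z0 + e *\<^sub>R w \<in> W" using z0W w subW by (intro subspace_add subspace_scale) auto
      then have h: "s0 * (norm (z0 + e *\<^sub>R w))\<^sup>2 \<le> F (z0 + e *\<^sub>R w)" by (rule homog)
      have e1: "F (z0 + e *\<^sub>R w) = F z0 + 2 * e * (\<Sum>s<t. (vs ! s \<bullet> z0) * (vs ! s \<bullet> w)) + e\<^sup>2 * F w"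
        unfolding F_def by (simp add: inner_add_right power2_eq_square algebra_simps sum.distrib sum_distrib_left)
      have e2: "(norm (z0 + e *\<^sub>R w))\<^sup>2 = 1 + 2 * e * (z0 \<bullet> w) + e\<^sup>2 * (norm w)\<^sup>2"
      proof -
        have "(norm (z0 + e *\<^sub>R w))\<^sup>2 = (z0 + e *\<^sub>R w) \<bullet> (z0 + e *\<^sub>R w)" by (rule power2_norm_eq_inner)
        also have "\<dots> = z0 \<bullet> z0 + 2 * e * (z0 \<bullet> w) + e\<^sup>2 * (w \<bullet> w)"
          by (simp add: inner_add_left inner_add_right inner_commute power2_eq_square algebra_simps)
        finally show ?thesis using nz0 by (simp add: power2_norm_eq_inner[symmetric])
      qed
      show ?thesis using h unfolding e1 e2 b_def c_def s0_def by (simp add: algebra_simps)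
    qed
    then have "b = 0" using quad_zero c0 by blast
    then show ?thesis unfolding b_def by simp
  qed
  define K where "K = B * transpose_mat B"
  have K: "K \<in> carrier_mat k k" unfolding K_def using B by simp
  define y0 where "y0 = vec k (\<lambda>j. z0 \<bullet> u j)"
  have Kentry: "K $$ (i, l) = (\<Sum>s<t. (vs ! s \<bullet> u i) * (vs ! s \<bullet> u l))" if "i < k" "l < k" for i l
    using that B unfolding K_def by (simp add: scalar_prod_def B_def atLeast0LessThan)
  have eig: "K *\<^sub>v y0 = s0 \<cdot>\<^sub>v y0"
  proof (rule eq_vecI)
    fix i assume "i < dim_vec (s0 \<cdot>\<^sub>v y0)"
    then have i: "i < k" unfolding y0_def by simp
    have "(K *\<^sub>v y0) $ i = (\<Sum>l<k. K $$ (i, l) * (z0 \<bullet> u l))"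
      using i K by (simp add: scalar_prod_def y0_def atLeast0LessThan)
    also have "\<dots> = (\<Sum>l<k. \<Sum>s<t. (vs ! s \<bullet> u i) * ((vs ! s \<bullet> u l) * (u l \<bullet> z0)))"
      using i by (intro sum.cong) (auto simp: Kentry sum_distrib_right inner_commute mult.assoc)
    also have "\<dots> = (\<Sum>s<t. (vs ! s \<bullet> u i) * (\<Sum>l<k. (vs ! s \<bullet> u l) * (u l \<bullet> z0)))"
      by (subst sum.swap) (simp add: sum_distrib_left)
    also have "\<dots> = (\<Sum>s<t. (vs ! s \<bullet> z0) * (vs ! s \<bullet> u i))"
    proof (intro sum.cong refl)
      fix s assume "s \<in> {..<t}"
      then have "vs ! s \<in> W" using vsW unfolding t_def W_def by auto
      then show "(vs ! s \<bullet> u i) * (\<Sum>l<k. (vs ! s \<bullet> u l) * (u l \<bullet> z0)) = (vs ! s \<bullet> z0) * (vs ! s \<bullet> u i)"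
        using on_inner[OF on, of "vs ! s" z0] unfolding W_def by simp
    qed
    also have "\<dots> = s0 * (z0 \<bullet> u i)" using stat[of "u i"] i unfolding W_def by (auto intro: span_base)
    finally show "(K *\<^sub>v y0) $ i = (s0 \<cdot>\<^sub>v y0) $ i" using i unfolding y0_def by simp
  qed (use K in \<open>auto simp: y0_def\<close>)
  have y0nz: "y0 \<noteq> 0\<^sub>v k"
  proof
    assume "y0 = 0\<^sub>v k"
    then have "\<forall>j<k. z0 \<bullet> u j = 0" unfolding y0_def by (metis index_vec index_zero_vec(1))
    then have "z0 = 0" using on_expand[OF on] z0W unfolding W_def by (metis (no_types, lifting) lessThan_iff scale_zero_left sum.neutral)
    then show False using nz0 by simp
  qed
  have "eigenvalue K s0" unfolding eigenvalue_def eigenvector_def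
    using eig y0nz K by (intro exI[of _ y0]) (auto simp: y0_def)
  then have "poly (char_poly K) s0 = 0" using eigenvalue_root_char_poly[OF K] by simp
  moreover have "char_poly K \<noteq> 0" using degree_monic_char_poly[OF K] by auto
  ultimately have "s0 \<in># proots (char_poly K)" by simp
  then have "\<sigma>\<^sup>2 \<le> s0" using roots unfolding K_def by auto
  then have "\<sigma>\<^sup>2 * (norm z)\<^sup>2 \<le> s0 * (norm z)\<^sup>2" by (simp add: mult_right_mono)
  also have "\<dots> \<le> F z" using homog z unfolding W_def by simp
  finally show ?thesis unfolding F_def t_def .
qed




definition Pp :: "nat \<Rightarrow> (nat \<Rightarrow> 'v::real_inner) \<Rightarrow> 'v \<Rightarrow> 'v" where
  "Pp k u x = (\<Sum>j<k. (u j \<bullet> x) *\<^sub>R u j)"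

definition Qp :: "nat \<Rightarrow> (nat \<Rightarrow> 'v::real_inner) \<Rightarrow> 'v \<Rightarrow> 'v" where
  "Qp k u x = x - Pp k u x"

lemma Pp_inner: "Pp k u x \<bullet> y = (\<Sum>j<k. (u j \<bullet> x) * (u j \<bullet> y))"
  unfolding Pp_def by (simp add: inner_sum_left)

lemma Pp_Pp:
  assumes on: "orthonormal_cols k u"
  shows "Pp k u x \<bullet> Pp k u y = (\<Sum>j<k. (u j \<bullet> x) * (u j \<bullet> y))"
proof -
  have "Pp k u x \<bullet> Pp k u y = (\<Sum>j<k. (u j \<bullet> x) * (u j \<bullet> Pp k u y))"
    by (simp add: Pp_inner)
  also have "\<dots> = (\<Sum>j<k. (u j \<bullet> x) * (u j \<bullet> y))"
  proof (intro sum.cong refl)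
    fix j assume j: "j \<in> {..<k}"
    have "u j \<bullet> Pp k u y = (\<Sum>l<k. (u l \<bullet> y) * (u j \<bullet> u l))"
      unfolding Pp_def by (simp add: inner_sum_right)
    also have "\<dots> = (\<Sum>l<k. if l = j then u j \<bullet> y else 0)"
      using on j unfolding orthonormal_cols_def by (intro sum.cong) auto
    also have "\<dots> = u j \<bullet> y" using j by (simp add: sum.delta)
    finally show "(u j \<bullet> x) * (u j \<bullet> Pp k u y) = (u j \<bullet> x) * (u j \<bullet> y)" by simp
  qed
  finally show ?thesis .
qed

lemma Qp_inner:
  assumes on: "orthonormal_cols k u"
  shows "Qp k u x \<bullet> y = x \<bullet> y - (\<Sum>j<k. (u j \<bullet> x) * (u j \<bullet> y))"
    and "x \<bullet> Qp k u y = x \<bullet> y - (\<Sum>j<k. (u j \<bullet> x) * (u j \<bullet> y))"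
    and "Qp k u x \<bullet> Qp k u y = x \<bullet> y - (\<Sum>j<k. (u j \<bullet> x) * (u j \<bullet> y))"
    and "Pp k u x \<bullet> Qp k u y = 0"
  unfolding Qp_def using Pp_Pp[OF on, of x y] Pp_Pp[OF on, of y x] Pp_inner[of k u x y] Pp_inner[of k u y x]
  by (auto simp: inner_diff_left inner_diff_right inner_commute mult.commute)

lemma linear_Pp: "linear (Pp k u)"
  unfolding Pp_def by (rule linearI) (auto simp: inner_add_right scaleR_add_left sum.distrib scaleR_sum_right)

lemma linear_Qp: "linear (Qp k u)"
  unfolding Qp_def using linear_Pp[of k u] by (intro linear_compose_sub linear_ident)

lemma norm_Pp_Qp:
  assumes on: "orthonormal_cols k u"
  shows "(norm x)\<^sup>2 = (norm (Pp k u x))\<^sup>2 + (norm (Qp k u x))\<^sup>2"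
proof -
  have "x = Pp k u x + Qp k u x" unfolding Qp_def by simp
  then have "x \<bullet> x = (Pp k u x + Qp k u x) \<bullet> (Pp k u x + Qp k u x)" by simp
  also have "\<dots> = Pp k u x \<bullet> Pp k u x + Qp k u x \<bullet> Qp k u x"
    using Qp_inner(4)[OF on, of x x] by (simp add: inner_add_left inner_add_right inner_commute)
  finally show ?thesis by (simp add: power2_norm_eq_inner)
qed

lemma Q_bound:
  fixes u u' :: "nat \<Rightarrow> 'v::euclidean_space" and vs :: "'v list"
  assumes on: "orthonormal_cols k u" and k1: "k \<ge> 1" and on': "orthonormal_cols k' u'"
    and vsW: "\<forall>s<length vs. vs ! s \<in> span (u ` {..<k})"
    and s: "\<sigma> > 0" and kv: "kth_singular_value k vs \<ge> \<sigma>"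
    and w: "w \<in> span (u ` {..<k})"
  shows "(norm (Qp k' u' w))\<^sup>2 \<le> (norm w)\<^sup>2 / \<sigma>\<^sup>2 * (\<Sum>s<length vs. (norm (Qp k' u' (vs ! s)))\<^sup>2)"
proof -
  define W where "W = span (u ` {..<k})"
  define Q where "Q = Qp k' u'"
  define q where "q = Q w"
  define p where "p = (\<Sum>j<k. (q \<bullet> u j) *\<^sub>R u j)"
  define A where "A = (\<Sum>s<length vs. (norm (Q (vs ! s)))\<^sup>2)"
  have A0: "A \<ge> 0" unfolding A_def by (simp add: sum_nonneg)
  have QQ: "Q x \<bullet> Q y = Q x \<bullet> y" for x y unfolding Q_def using Qp_inner[OF on'] by simp
  have QQ': "Q x \<bullet> Q y = x \<bullet> Q y" for x y unfolding Q_def using Qp_inner[OF on'] by simp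
  have pW: "p \<in> W" unfolding p_def W_def by (intro span_sum span_scale span_base) auto
  have nq: "(norm q)\<^sup>2 = q \<bullet> w" unfolding q_def using QQ[of w w] by (simp add: power2_norm_eq_inner)
  have qw: "q \<bullet> w = p \<bullet> w"
  proof -
    have "w \<bullet> q = (\<Sum>j<k. (w \<bullet> u j) * (u j \<bullet> q))" using on_inner[OF on] w by blast
    moreover have "p \<bullet> w = (\<Sum>j<k. (q \<bullet> u j) * (u j \<bullet> w))" unfolding p_def by (simp add: inner_sum_left)
    ultimately show ?thesis by (simp add: inner_commute mult.commute)
  qed
  have vp: "v \<bullet> p = v \<bullet> q" if v: "v \<in> W" for v
  proof -
    have "v \<bullet> q = (\<Sum>j<k. (v \<bullet> u j) * (u j \<bullet> q))" using on_inner[OF on] v unfolding W_def by blast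
    moreover have "v \<bullet> p = (\<Sum>j<k. (q \<bullet> u j) * (v \<bullet> u j))" unfolding p_def by (simp add: inner_sum_right)
    ultimately show ?thesis by (simp add: inner_commute mult.commute)
  qed
  have sb: "\<sigma>\<^sup>2 * (norm p)\<^sup>2 \<le> (\<Sum>s<length vs. (vs ! s \<bullet> p)\<^sup>2)"
    using sv_bound[OF on k1 vsW s kv] pW unfolding W_def by blast
  also have "\<dots> = (\<Sum>s<length vs. (Q (vs ! s) \<bullet> q)\<^sup>2)"
  proof (intro sum.cong refl)
    fix s assume "s \<in> {..<length vs}"
    then have "vs ! s \<in> W" using vsW unfolding W_def by auto
    then have "vs ! s \<bullet> p = vs ! s \<bullet> q" by (rule vp)
    also have "\<dots> = Q (vs ! s) \<bullet> q" unfolding q_def using QQ'[of "vs ! s" w] QQ[of "vs ! s" w] by simp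
    finally show "(vs ! s \<bullet> p)\<^sup>2 = (Q (vs ! s) \<bullet> q)\<^sup>2" by simp
  qed
  also have "\<dots> \<le> (\<Sum>s<length vs. (norm (Q (vs ! s)))\<^sup>2 * (norm q)\<^sup>2)"
  proof (intro sum_mono)
    fix s
    have "\<bar>Q (vs ! s) \<bullet> q\<bar> \<le> norm (Q (vs ! s)) * norm q" by (rule Cauchy_Schwarz_ineq2)
    then have "\<bar>Q (vs ! s) \<bullet> q\<bar>\<^sup>2 \<le> (norm (Q (vs ! s)) * norm q)\<^sup>2"
      by (intro power_mono) auto
    then show "(Q (vs ! s) \<bullet> q)\<^sup>2 \<le> (norm (Q (vs ! s)))\<^sup>2 * (norm q)\<^sup>2" by (simp add: power_mult_distrib)
  qed
  also have "\<dots> = A * (norm q)\<^sup>2" unfolding A_def by (simp add: sum_distrib_right)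
  finally have pb: "\<sigma>\<^sup>2 * (norm p)\<^sup>2 \<le> A * (norm q)\<^sup>2" .
  have "((norm q)\<^sup>2)\<^sup>2 = (p \<bullet> w)\<^sup>2" using nq qw by simp
  also have "\<dots> \<le> (norm p * norm w)\<^sup>2"
    using Cauchy_Schwarz_ineq2[of p w] by (metis abs_le_square_iff abs_mult abs_norm_cancel)
  also have "\<dots> = (norm p)\<^sup>2 * (norm w)\<^sup>2" by (simp add: power_mult_distrib)
  also have "\<dots> \<le> (A * (norm q)\<^sup>2 / \<sigma>\<^sup>2) * (norm w)\<^sup>2"
    using pb s by (intro mult_right_mono) (auto simp: pos_le_divide_eq mult.commute)
  finally have main: "((norm q)\<^sup>2)\<^sup>2 \<le> (norm q)\<^sup>2 * ((norm w)\<^sup>2 / \<sigma>\<^sup>2 * A)" by (simp add: field_simps)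
  show ?thesis
  proof (cases "norm q = 0")
    case True then show ?thesis using A0 unfolding q_def Q_def A_def by simp
  next
    case False
    then have "(norm q)\<^sup>2 > 0" by simp
    moreover have "(norm q)\<^sup>2 * (norm q)\<^sup>2 \<le> (norm q)\<^sup>2 * ((norm w)\<^sup>2 / \<sigma>\<^sup>2 * A)"
      using main by (simp only: power2_eq_square[of "(norm q)\<^sup>2"])
    ultimately have "(norm q)\<^sup>2 \<le> (norm w)\<^sup>2 / \<sigma>\<^sup>2 * A"
      using mult_le_cancel_left_pos by blast
    then show ?thesis unfolding q_def Q_def A_def .
  qed
qed




lemma sum_sorted:
  assumes "finite T"
  shows "(\<Sum>s<length (map F (sorted_list_of_set T)). f (map F (sorted_list_of_set T) ! s)) = (\<Sum>i\<in>T. f (F i))"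
proof -
  define sl where "sl = sorted_list_of_set T"
  have "(\<Sum>s<length (map F sl). f (map F sl ! s)) = (\<Sum>s<length sl. (\<lambda>i. f (F i)) (sl ! s))" by simp
  also have "\<dots> = sum_list (map (\<lambda>i. f (F i)) sl)"
    by (simp add: sum_list_sum_nth atLeast0LessThan)
  also have "\<dots> = (\<Sum>i\<in>T. f (F i))" unfolding sl_def using assms
    by (simp add: sum_list_distinct_conv_sum_set)
  finally show ?thesis unfolding sl_def .
qed

lemma var_id:
  fixes x :: "nat \<Rightarrow> 'v::real_inner"
  assumes A: "finite A" "card A > 0"
  defines "xb \<equiv> (1 / real (card A)) *\<^sub>R (\<Sum>i\<in>A. x i)"
  shows "(\<Sum>i\<in>A. (norm (x i - xb))\<^sup>2) = (\<Sum>i\<in>A. (norm (x i))\<^sup>2) - real (card A) * (norm xb)\<^sup>2"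
proof -
  have sx: "(\<Sum>i\<in>A. x i) = real (card A) *\<^sub>R xb" unfolding xb_def using A by simp
  have "(\<Sum>i\<in>A. (norm (x i - xb))\<^sup>2) = (\<Sum>i\<in>A. (norm (x i))\<^sup>2 - 2 * (x i \<bullet> xb) + (norm xb)\<^sup>2)"
    by (intro sum.cong refl) (simp add: power2_norm_eq_inner inner_diff_left inner_diff_right inner_commute)
  also have "\<dots> = (\<Sum>i\<in>A. (norm (x i))\<^sup>2) - 2 * ((\<Sum>i\<in>A. x i) \<bullet> xb) + real (card A) * (norm xb)\<^sup>2"
    by (simp add: sum.distrib sum_subtractf inner_sum_left sum_distrib_left)
  also have "\<dots> = (\<Sum>i\<in>A. (norm (x i))\<^sup>2) - real (card A) * (norm xb)\<^sup>2"
    unfolding sx by (simp add: power2_norm_eq_inner)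
  finally show ?thesis .
qed

lemma jensen_avg:
  fixes x :: "nat \<Rightarrow> 'v::real_inner"
  assumes A: "finite A" "card A > 0"
  shows "(norm ((1 / real (card A)) *\<^sub>R (\<Sum>i\<in>A. x i)))\<^sup>2 \<le> (1 / real (card A)) * (\<Sum>i\<in>A. (norm (x i))\<^sup>2)"
proof -
  define xb where "xb = (1 / real (card A)) *\<^sub>R (\<Sum>i\<in>A. x i)"
  have "0 \<le> (\<Sum>i\<in>A. (norm (x i - xb))\<^sup>2)" by (simp add: sum_nonneg)
  then have "real (card A) * (norm xb)\<^sup>2 \<le> (\<Sum>i\<in>A. (norm (x i))\<^sup>2)"
    using var_id[OF A, of x] unfolding xb_def by simp
  then show ?thesis using A unfolding xb_def[symmetric] by (simp add: field_simps)
qed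

lemma var_le:
  fixes x :: "nat \<Rightarrow> 'v::real_inner"
  assumes A: "finite A" "card A > 0"
  shows "(\<Sum>i\<in>A. (norm (x i - (1 / real (card A)) *\<^sub>R (\<Sum>i\<in>A. x i)))\<^sup>2) \<le> (\<Sum>i\<in>A. (norm (x i))\<^sup>2)"
  using var_id[OF A, of x] by simp

lemma sq_tri: "(norm (a + b))\<^sup>2 \<le> 2 * (norm a)\<^sup>2 + 2 * (norm (b::'v::real_normed_vector))\<^sup>2"
proof -
  have "(norm (a + b))\<^sup>2 \<le> (norm a + norm b)\<^sup>2" by (intro power_mono norm_triangle_ineq) auto
  also have "\<dots> \<le> 2 * (norm a)\<^sup>2 + 2 * (norm b)\<^sup>2" using sum_squares_bound[of "norm a" "norm b"] by (simp add: power2_eq_square algebra_simps)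
  finally show ?thesis .
qed




lemma proj_aff_Pp: "proj_aff k u m x = Pp k u (x - m) + m"
  unfolding proj_aff_def Pp_def by simp

lemma norm_Qp_le: "orthonormal_cols k u \<Longrightarrow> (norm (Qp k u x))\<^sup>2 \<le> (norm x)\<^sup>2"
  using norm_Pp_Qp[of k u x] by simp

lemma norm_Pp_le: "orthonormal_cols k u \<Longrightarrow> (norm (Pp k u x))\<^sup>2 \<le> (norm x)\<^sup>2"
  using norm_Pp_Qp[of k u x] by simp

lemma part1:
  fixes n f c :: nat and H :: "nat set" and Eg :: "nat \<Rightarrow> 'v::euclidean_space"
    and \<delta> \<sigma> :: real and g :: "nat \<Rightarrow> 'v" and u :: "nat \<Rightarrow> 'v"
  assumes c2: "c \<ge> 2" and nf: "n - 2 * f \<ge> 1"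
    and H_sub: "H \<subseteq> {1..n}" and B_card: "card ({1..n} - H) \<le> f"
    and A_sub: "\<exists>u m. orthonormal_cols (c - 1) u \<and> (\<forall>i\<in>H. Eg i \<in> affine_sub (c - 1) u m)"
    and A_outer: "\<forall>i\<in>H. norm (Eg i - (1 / real (card H)) *\<^sub>R (\<Sum>i'\<in>H. Eg i')) \<le> \<delta>"
    and \<sigma>_pos: "\<sigma> > 0"
    and A_sing: "\<forall>S. S \<subseteq> H \<and> card S = n - 2 * f \<longrightarrow>
        kth_singular_value (c - 1)
          (map (\<lambda>s. Eg s - (1 / real (n - 2 * f)) *\<^sub>R (\<Sum>s'\<in>S. Eg s')) (sorted_list_of_set S))
        \<ge> \<sigma>"
    and onk: "orthonormal_cols k u"
  shows "(norm ((1 / real (card H)) *\<^sub>R (\<Sum>i\<in>H. proj_aff k u m (g i))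
               - (1 / real (card H)) *\<^sub>R (\<Sum>i\<in>H. Eg i)))\<^sup>2
        \<le> 2 / real (card H) * (\<Sum>i\<in>H. (norm (g i - Eg i))\<^sup>2)
          + 4 * (1 / real (n - 2 * f) + \<delta>\<^sup>2 / \<sigma>\<^sup>2)
              * (trimmed_loss n f g k u m + (\<Sum>i\<in>H. (norm (g i - Eg i))\<^sup>2))"
proof -
  define h where "h = card H"
  define t where "t = n - 2 * f"
  define E where "E = (\<Sum>i\<in>H. (norm (g i - Eg i))\<^sup>2)"
  define C where "C = 1 / real t + \<delta>\<^sup>2 / \<sigma>\<^sup>2"
  define d where "d = (\<lambda>i. (norm (g i - proj_aff k u m (g i)))\<^sup>2)"
  define P where "P = Pp k u"
  define Q where "Q = Qp k u"
  define e where "e = (\<lambda>i. g i - Eg i)"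
  define r where "r = (\<lambda>i. Q (Eg i - m))"
  have linP: "linear P" unfolding P_def by (rule linear_Pp)
  have linQ: "linear Q" unfolding Q_def by (rule linear_Qp)
  have finH: "finite H" using H_sub finite_subset by blast
  have "card ({1..n} - H) = n - h" using H_sub unfolding h_def by (simp add: card_Diff_subset finH)
  moreover have "h \<le> n" using card_mono[OF _ H_sub] unfolding h_def by simp
  ultimately have hge: "h \<ge> n - f" using B_card by simp
  have t1: "t \<ge> 1" using nf unfolding t_def .
  have ht: "h \<ge> t" using hge unfolding t_def by simp
  have h0: "h > 0" using ht t1 by simp
  have C0: "C \<ge> 0" unfolding C_def by simp
  define LS where "LS = {(\<Sum>i\<in>S. d i) | S. S \<subseteq> {1..n} \<and> card S = n - f}"
  have LSim: "LS = (\<lambda>S. \<Sum>i\<in>S. d i) ` {S. S \<subseteq> {1..n} \<and> card S = n - f}" unfolding LS_def by auto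
  have finLS: "finite LS" unfolding LSim by (rule finite_imageI) (rule finite_subset[of _ "Pow {1..n}"], auto)
  have "{1..n - f} \<in> {S. S \<subseteq> {1..n} \<and> card S = n - f}" by auto
  then have neLS: "LS \<noteq> {}" unfolding LSim by blast
  have tl: "trimmed_loss n f g k u m = Min LS" unfolding trimmed_loss_def LS_def d_def ..
  have "trimmed_loss n f g k u m \<in> LS" using Min_in[OF finLS neLS] tl by simp
  then obtain Sopt where Sopt: "Sopt \<subseteq> {1..n}" "card Sopt = n - f" "trimmed_loss n f g k u m = (\<Sum>i\<in>Sopt. d i)"
    unfolding LS_def by auto
  have finS: "finite Sopt" using Sopt(1) finite_subset by blast
  have "card (Sopt - H) \<le> card ({1..n} - H)" using Sopt(1) by (intro card_mono) auto
  then have "card (Sopt - H) \<le> f" using B_card by simp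
  moreover have "card Sopt = card (Sopt \<inter> H) + card (Sopt - H)" by (rule card_Int_Diff[OF finS])
  ultimately have "t \<le> card (Sopt \<inter> H)" using Sopt(2) unfolding t_def by simp
  then obtain T where T: "T \<subseteq> Sopt \<inter> H" "card T = t" "finite T" by (rule obtain_subset_with_card_n)
  have TH: "T \<subseteq> H" and TS: "T \<subseteq> Sopt" using T by auto
  have T0: "card T > 0" using T t1 by simp
  define eb where "eb = (1 / real h) *\<^sub>R (\<Sum>i\<in>H. e i)"
  define Emu where "Emu = (1 / real h) *\<^sub>R (\<Sum>i\<in>H. Eg i)"
  define EmuT where "EmuT = (1 / real t) *\<^sub>R (\<Sum>i\<in>T. Eg i)"
  define w where "w = Emu - EmuT"
  define X where "X = P eb"
  define Y where "Y = Q (Emu - m)"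
  have pe: "proj_aff k u m (g i) - Eg i = P (e i) - r i" for i
  proof -
    have "P (e i) = P (g i - m) - P (Eg i - m)" unfolding e_def
      using linear_diff[OF linP, of "g i - m" "Eg i - m"] by simp
    then show ?thesis unfolding proj_aff_Pp r_def Q_def Qp_def P_def[symmetric] by (simp add: algebra_simps)
  qed
  have summ: "(1 / real h) *\<^sub>R (\<Sum>i\<in>H. m) = m" using h0 unfolding h_def by (simp add: sum_constant_scaleR)
  have "(1 / real h) *\<^sub>R (\<Sum>i\<in>H. r i) = Q ((1 / real h) *\<^sub>R (\<Sum>i\<in>H. Eg i - m))"
    unfolding r_def by (simp add: linear_sum[OF linQ] linear_scale[OF linQ])
  also have "(1 / real h) *\<^sub>R (\<Sum>i\<in>H. Eg i - m) = Emu - m"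
    unfolding Emu_def using summ by (simp add: sum_subtractf scaleR_diff_right)
  finally have rY: "(1 / real h) *\<^sub>R (\<Sum>i\<in>H. r i) = Y" unfolding Y_def .
  have eX: "(1 / real h) *\<^sub>R (\<Sum>i\<in>H. P (e i)) = X" unfolding X_def eb_def
    by (simp add: linear_sum[OF linP] linear_scale[OF linP])
  have V: "(1 / real (card H)) *\<^sub>R (\<Sum>i\<in>H. proj_aff k u m (g i)) - (1 / real (card H)) *\<^sub>R (\<Sum>i\<in>H. Eg i) = X - Y"
  proof -
    have "(1 / real (card H)) *\<^sub>R (\<Sum>i\<in>H. proj_aff k u m (g i)) - (1 / real (card H)) *\<^sub>R (\<Sum>i\<in>H. Eg i)
        = (1 / real h) *\<^sub>R (\<Sum>i\<in>H. proj_aff k u m (g i) - Eg i)"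
      unfolding h_def by (simp add: sum_subtractf scaleR_diff_right)
    also have "\<dots> = (1 / real h) *\<^sub>R (\<Sum>i\<in>H. P (e i)) - (1 / real h) *\<^sub>R (\<Sum>i\<in>H. r i)"
      unfolding pe by (simp add: sum_subtractf scaleR_diff_right)
    finally show ?thesis using rY eX by simp
  qed
  have XY: "X \<bullet> Y = 0" unfolding X_def Y_def P_def Q_def using Qp_inner(4)[OF onk] by simp
  have nV: "(norm (X - Y))\<^sup>2 = (norm X)\<^sup>2 + (norm Y)\<^sup>2"
    using XY by (simp add: power2_norm_eq_inner inner_diff_left inner_diff_right inner_commute)
  have nX: "(norm X)\<^sup>2 \<le> (1 / real h) * E"
  proof -
    have "(norm X)\<^sup>2 \<le> (norm eb)\<^sup>2" unfolding X_def P_def by (rule norm_Pp_le[OF onk])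
    also have "\<dots> \<le> (1 / real h) * E" unfolding eb_def E_def h_def e_def
      using jensen_avg[OF finH, of "\<lambda>i. g i - Eg i"] h0 unfolding h_def by simp
    finally show ?thesis .
  qed
  define RT where "RT = (\<Sum>i\<in>T. (norm (r i))\<^sup>2)"
  have RT0: "RT \<ge> 0" unfolding RT_def by (simp add: sum_nonneg)
  have sumT: "(1 / real t) *\<^sub>R (\<Sum>i\<in>T. m) = m" using T0 T(2) by (simp add: sum_constant_scaleR)
  have QT: "Q (EmuT - m) = (1 / real t) *\<^sub>R (\<Sum>i\<in>T. r i)"
  proof -
    have "EmuT - m = (1 / real t) *\<^sub>R (\<Sum>i\<in>T. Eg i - m)"
      unfolding EmuT_def using sumT by (simp add: sum_subtractf scaleR_diff_right)
    then show ?thesis unfolding r_def by (simp add: linear_sum[OF linQ] linear_scale[OF linQ])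
  qed
  have Ysplit: "Y = Q (EmuT - m) + Q w" unfolding Y_def w_def
    using linear_add[OF linQ, of "EmuT - m" "Emu - EmuT"] by simp
  have Y1: "(norm (Q (EmuT - m)))\<^sup>2 \<le> (1 / real t) * RT"
    unfolding QT RT_def using jensen_avg[OF T(3) T0, of r] T(2) by simp
  obtain us ms where us: "orthonormal_cols (c - 1) us" and aff: "\<forall>i\<in>H. Eg i \<in> affine_sub (c - 1) us ms"
    using A_sub by blast
  define W where "W = span (us ` {..<c - 1})"
  have subW: "subspace W" unfolding W_def by (rule subspace_span)
  have EgW: "Eg i - ms \<in> W" if "i \<in> H" for i
  proof -
    have "Eg i \<in> affine_sub (c - 1) us ms" using aff that by blast
    then obtain lam where "Eg i = (\<Sum>j<c - 1. lam j *\<^sub>R us j) + ms" unfolding affine_sub_def by auto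
    then have "Eg i - ms = (\<Sum>j<c - 1. lam j *\<^sub>R us j)" by simp
    moreover have "(\<Sum>j<c - 1. lam j *\<^sub>R us j) \<in> W" unfolding W_def
      by (intro span_sum span_scale span_base) auto
    ultimately show ?thesis by simp
  qed
  have sumTs: "(1 / real t) *\<^sub>R (\<Sum>i\<in>T. ms) = ms" using T0 T(2) by (simp add: sum_constant_scaleR)
  have sumHs: "(1 / real h) *\<^sub>R (\<Sum>i\<in>H. ms) = ms" using h0 unfolding h_def by (simp add: sum_constant_scaleR)
  have EmuTW: "EmuT - ms \<in> W"
  proof -
    have "EmuT - ms = (1 / real t) *\<^sub>R (\<Sum>i\<in>T. Eg i - ms)"
      unfolding EmuT_def using sumTs by (simp add: sum_subtractf scaleR_diff_right)
    moreover have "(\<Sum>i\<in>T. Eg i - ms) \<in> W" using EgW TH subW by (intro subspace_sum) auto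
    ultimately show ?thesis using subW by (simp add: subspace_scale)
  qed
  have EmuW: "Emu - ms \<in> W"
  proof -
    have "Emu - ms = (1 / real h) *\<^sub>R (\<Sum>i\<in>H. Eg i - ms)"
      unfolding Emu_def using sumHs by (simp add: sum_subtractf scaleR_diff_right)
    moreover have "(\<Sum>i\<in>H. Eg i - ms) \<in> W" using EgW subW by (intro subspace_sum) auto
    ultimately show ?thesis using subW by (simp add: subspace_scale)
  qed
  have wW: "w \<in> W" using subspace_diff[OF subW EmuW EmuTW] unfolding w_def by simp
  define vs where "vs = map (\<lambda>s. Eg s - EmuT) (sorted_list_of_set T)"
  have vsW: "\<forall>s<length vs. vs ! s \<in> W"
  proof (intro allI impI)
    fix s assume "s < length vs"
    then have "sorted_list_of_set T ! s \<in> T" unfolding vs_def using T(3)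
      using nth_mem[of s "sorted_list_of_set T"] by simp
    then have "Eg (sorted_list_of_set T ! s) - ms \<in> W" using EgW TH by auto
    then have "(Eg (sorted_list_of_set T ! s) - ms) - (EmuT - ms) \<in> W" using subspace_diff[OF subW _ EmuTW] by blast
    then show "vs ! s \<in> W" unfolding vs_def using \<open>s < length vs\<close> by (simp add: vs_def)
  qed
  have kv: "kth_singular_value (c - 1) vs \<ge> \<sigma>"
    using A_sing TH T(2) unfolding vs_def EmuT_def t_def by blast
  have c1: "c - 1 \<ge> 1" using c2 by simp
  have Qw: "(norm (Q w))\<^sup>2 \<le> (norm w)\<^sup>2 / \<sigma>\<^sup>2 * (\<Sum>s<length vs. (norm (Q (vs ! s)))\<^sup>2)"
    using Q_bound[OF us c1 onk _ \<sigma>_pos kv, of w] vsW wW unfolding W_def Q_def by blast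
  have "(\<Sum>s<length vs. (norm (Q (vs ! s)))\<^sup>2) = (\<Sum>i\<in>T. (norm (Q (Eg i - EmuT)))\<^sup>2)"
    unfolding vs_def by (rule sum_sorted[OF T(3)])
  also have "\<dots> = (\<Sum>i\<in>T. (norm (r i - (1 / real (card T)) *\<^sub>R (\<Sum>i\<in>T. r i)))\<^sup>2)"
  proof (intro sum.cong refl)
    fix i
    have "Q (Eg i - EmuT) = Q ((Eg i - m) - (EmuT - m))" by simp
    also have "\<dots> = r i - Q (EmuT - m)" unfolding r_def by (rule linear_diff[OF linQ])
    finally show "(norm (Q (Eg i - EmuT)))\<^sup>2 = (norm (r i - (1 / real (card T)) *\<^sub>R (\<Sum>i\<in>T. r i)))\<^sup>2"
      unfolding QT T(2) by simp
  qed
  also have "\<dots> \<le> RT" unfolding RT_def by (rule var_le[OF T(3) T0])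
  finally have sQv: "(\<Sum>s<length vs. (norm (Q (vs ! s)))\<^sup>2) \<le> RT" .
  have nw: "norm w \<le> \<delta>"
  proof -
    have "w = (1 / real t) *\<^sub>R (\<Sum>i\<in>T. Emu - Eg i)"
      unfolding w_def EmuT_def using T0 T(2) by (simp add: sum_subtractf scaleR_diff_right sum_constant_scaleR)
    then have "norm w = (1 / real t) * norm (\<Sum>i\<in>T. Emu - Eg i)" by simp
    also have "\<dots> \<le> (1 / real t) * (\<Sum>i\<in>T. norm (Emu - Eg i))"
      by (intro mult_left_mono norm_sum) auto
    also have "\<dots> \<le> (1 / real t) * (\<Sum>i\<in>T. \<delta>)"
    proof (intro mult_left_mono sum_mono)
      fix i assume "i \<in> T"
      then have "norm (Eg i - Emu) \<le> \<delta>" using A_outer TH unfolding Emu_def h_def by auto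
      then show "norm (Emu - Eg i) \<le> \<delta>" by (simp add: norm_minus_commute)
    qed auto
    also have "\<dots> = \<delta>" using T(2) T0 by simp
    finally show ?thesis .
  qed
  have nw2: "(norm w)\<^sup>2 \<le> \<delta>\<^sup>2" using nw by (intro power_mono) auto
  have Y2: "(norm (Q w))\<^sup>2 \<le> \<delta>\<^sup>2 / \<sigma>\<^sup>2 * RT"
  proof -
    have "(norm w)\<^sup>2 / \<sigma>\<^sup>2 * (\<Sum>s<length vs. (norm (Q (vs ! s)))\<^sup>2) \<le> \<delta>\<^sup>2 / \<sigma>\<^sup>2 * RT"
      using nw2 sQv by (intro mult_mono divide_right_mono) (auto simp: sum_nonneg)
    then show ?thesis using Qw by simp
  qed
  have nY: "(norm Y)\<^sup>2 \<le> 2 * C * RT"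
  proof -
    have "(norm Y)\<^sup>2 \<le> 2 * (norm (Q (EmuT - m)))\<^sup>2 + 2 * (norm (Q w))\<^sup>2" unfolding Ysplit by (rule sq_tri)
    also have "\<dots> \<le> 2 * ((1 / real t) * RT) + 2 * (\<delta>\<^sup>2 / \<sigma>\<^sup>2 * RT)" using Y1 Y2 by simp
    also have "\<dots> = 2 * C * RT" unfolding C_def by (simp add: algebra_simps)
    finally show ?thesis .
  qed
  have ri: "(norm (r i))\<^sup>2 \<le> 2 * d i + 2 * (norm (e i))\<^sup>2" for i
  proof -
    have "r i = Q (g i - m) + (- Q (e i))" unfolding r_def e_def
      using linear_diff[OF linQ, of "g i - m" "g i - Eg i"] by simp
    then have "(norm (r i))\<^sup>2 \<le> 2 * (norm (Q (g i - m)))\<^sup>2 + 2 * (norm (- Q (e i)))\<^sup>2" using sq_tri[of "Q (g i - m)" "- Q (e i)"] by simp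
    also have "(norm (Q (g i - m)))\<^sup>2 = d i" unfolding d_def Q_def Qp_def proj_aff_Pp by (simp add: algebra_simps)
    also have "(norm (- Q (e i)))\<^sup>2 \<le> (norm (e i))\<^sup>2" unfolding Q_def norm_minus_cancel by (rule norm_Qp_le[OF onk])
    finally show ?thesis by simp
  qed
  have RTb: "RT \<le> 2 * trimmed_loss n f g k u m + 2 * E"
  proof -
    have "RT \<le> (\<Sum>i\<in>T. 2 * d i + 2 * (norm (e i))\<^sup>2)" unfolding RT_def by (intro sum_mono ri)
    also have "\<dots> = 2 * (\<Sum>i\<in>T. d i) + 2 * (\<Sum>i\<in>T. (norm (e i))\<^sup>2)" by (simp add: sum.distrib sum_distrib_left)
    also have "(\<Sum>i\<in>T. d i) \<le> (\<Sum>i\<in>Sopt. d i)" using TS finS by (intro sum_mono2) (auto simp: d_def)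
    also have "(\<Sum>i\<in>T. (norm (e i))\<^sup>2) \<le> (\<Sum>i\<in>H. (norm (e i))\<^sup>2)" using TH finH by (intro sum_mono2) auto
    finally show ?thesis unfolding Sopt(3) E_def e_def by simp
  qed
  have "(norm (X - Y))\<^sup>2 \<le> (1 / real h) * E + 2 * C * RT" using nV nX nY by simp
  also have "\<dots> \<le> (1 / real h) * E + 2 * C * (2 * trimmed_loss n f g k u m + 2 * E)"
    using RTb C0 by (intro add_left_mono mult_left_mono) auto
  also have "\<dots> \<le> 2 / real h * E + 4 * C * (trimmed_loss n f g k u m + E)"
  proof -
    have "E \<ge> 0" unfolding E_def by (simp add: sum_nonneg)
    then have "(1 / real h) * E \<le> 2 / real h * E" using h0 by (simp add: divide_right_mono mult_right_mono)
    then show ?thesis by (simp add: algebra_simps)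
  qed
  finally show ?thesis unfolding V[symmetric] h_def E_def C_def t_def .
qed




lemma integ_bound:
  fixes L TL :: "'w \<Rightarrow> real" and X :: "nat \<Rightarrow> 'w \<Rightarrow> real" and M :: "'w measure"
  assumes finH: "finite H" and a0: "a \<ge> 0" and K0: "K \<ge> 0" and ah: "a * real (card H) \<le> 2"
    and pt: "\<forall>\<omega>\<in>space M. L \<omega> \<le> a * (\<Sum>i\<in>H. X i \<omega>) + K * (TL \<omega> + (\<Sum>i\<in>H. X i \<omega>))"
    and Xm: "\<forall>i\<in>H. (\<lambda>\<omega>. X i \<omega>) \<in> borel_measurable M" and X0: "\<forall>i \<omega>. X i \<omega> \<ge> 0"
    and TLm: "TL \<in> borel_measurable M" and TL0: "\<forall>\<omega>. TL \<omega> \<ge> 0"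
    and Xi: "\<forall>i\<in>H. (\<integral>\<^sup>+\<omega>. ennreal (X i \<omega>) \<partial>M) \<le> ennreal (\<epsilon>\<^sup>2)"
  shows "(\<integral>\<^sup>+\<omega>. ennreal (L \<omega>) \<partial>M) \<le> ennreal (2 * \<epsilon>\<^sup>2)
      + ennreal K * ((\<integral>\<^sup>+\<omega>. ennreal (TL \<omega>) \<partial>M) + ennreal (real (card H) * \<epsilon>\<^sup>2))"
proof -
  define S where "S = (\<lambda>\<omega>. \<Sum>i\<in>H. ennreal (X i \<omega>))"
  have Sm: "S \<in> borel_measurable M" unfolding S_def using Xm by (intro borel_measurable_sum) auto
  have TLm': "(\<lambda>\<omega>. ennreal (TL \<omega>)) \<in> borel_measurable M" using TLm by simp
  have "(\<integral>\<^sup>+\<omega>. ennreal (L \<omega>) \<partial>M) \<le> (\<integral>\<^sup>+\<omega>. ennreal a * S \<omega> + ennreal K * (ennreal (TL \<omega>) + S \<omega>) \<partial>M)"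
  proof (rule nn_integral_mono)
    fix \<omega> assume "\<omega> \<in> space M"
    then have "ennreal (L \<omega>) \<le> ennreal (a * (\<Sum>i\<in>H. X i \<omega>) + K * (TL \<omega> + (\<Sum>i\<in>H. X i \<omega>)))"
      using pt by (intro ennreal_leI) auto
    also have "\<dots> = ennreal a * S \<omega> + ennreal K * (ennreal (TL \<omega>) + S \<omega>)"
      unfolding S_def using X0 TL0 a0 K0
      by (simp add: ennreal_plus ennreal_mult sum_nonneg add_nonneg_nonneg del: ennreal_plus_if)
    finally show "ennreal (L \<omega>) \<le> ennreal a * S \<omega> + ennreal K * (ennreal (TL \<omega>) + S \<omega>)" .
  qed
  also have "\<dots> = ennreal a * (\<integral>\<^sup>+\<omega>. S \<omega> \<partial>M) + ennreal K * ((\<integral>\<^sup>+\<omega>. ennreal (TL \<omega>) \<partial>M) + (\<integral>\<^sup>+\<omega>. S \<omega> \<partial>M))"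
    using Sm TLm' by (simp add: nn_integral_add nn_integral_cmult)
  also have "(\<integral>\<^sup>+\<omega>. S \<omega> \<partial>M) = (\<Sum>i\<in>H. (\<integral>\<^sup>+\<omega>. ennreal (X i \<omega>) \<partial>M))"
    unfolding S_def using Xm by (intro nn_integral_sum) auto
  also have "\<dots> \<le> (\<Sum>i\<in>H. ennreal (\<epsilon>\<^sup>2))" using Xi by (intro sum_mono) auto
  also have "\<dots> = ennreal (real (card H) * \<epsilon>\<^sup>2)" by (simp add: ennreal_of_nat_eq_real_of_nat ennreal_mult)
  finally have "(\<integral>\<^sup>+\<omega>. ennreal (L \<omega>) \<partial>M) \<le> ennreal a * ennreal (real (card H) * \<epsilon>\<^sup>2)
      + ennreal K * ((\<integral>\<^sup>+\<omega>. ennreal (TL \<omega>) \<partial>M) + ennreal (real (card H) * \<epsilon>\<^sup>2))"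
    by (simp add: add_mono mult_left_mono)
  also have "ennreal a * ennreal (real (card H) * \<epsilon>\<^sup>2) \<le> ennreal (2 * \<epsilon>\<^sup>2)"
  proof -
    have "a * (real (card H) * \<epsilon>\<^sup>2) \<le> 2 * \<epsilon>\<^sup>2" using ah by (simp add: mult.assoc[symmetric] mult_right_mono)
    then show ?thesis using a0 by (simp add: ennreal_mult[symmetric] ennreal_leI)
  qed
  finally show ?thesis by (simp add: add_right_mono)
qed




lemma tl_nonneg: "trimmed_loss n f g k u m \<ge> 0"
proof -
  define LS where "LS = {(\<Sum>i\<in>S. (norm (g i - proj_aff k u m (g i)))\<^sup>2) | S. S \<subseteq> {1..n} \<and> card S = n - f}"
  have LSim: "LS = (\<lambda>S. \<Sum>i\<in>S. (norm (g i - proj_aff k u m (g i)))\<^sup>2) ` {S. S \<subseteq> {1..n} \<and> card S = n - f}"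
    unfolding LS_def by auto
  have finLS: "finite LS" unfolding LSim by (rule finite_imageI) (rule finite_subset[of _ "Pow {1..n}"], auto)
  have "{1..n - f} \<in> {S. S \<subseteq> {1..n} \<and> card S = n - f}" by auto
  then have neLS: "LS \<noteq> {}" unfolding LSim by blast
  have "Min LS \<in> LS" by (rule Min_in[OF finLS neLS])
  then have "Min LS \<ge> 0" unfolding LS_def by (auto intro!: sum_nonneg)
  then show ?thesis unfolding trimmed_loss_def LS_def .
qed

theorem mainTheorem9:
  fixes n f c :: nat and H :: "nat set" and Eg :: "nat \<Rightarrow> 'v::euclidean_space"
    and \<delta> \<sigma> :: real
  assumes c2: "c \<ge> 2" and dc: "DIM('v) \<ge> c" and nf: "n - 2 * f \<ge> 1" and f1: "f \<ge> 1"
    and H_sub: "H \<subseteq> {1..n}" and B_card: "card ({1..n} - H) \<le> f"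
    and A_sub: "\<exists>u m. orthonormal_cols (c - 1) u \<and> (\<forall>i\<in>H. Eg i \<in> affine_sub (c - 1) u m)"
    and A_outer: "\<forall>i\<in>H. norm (Eg i - (1 / real (card H)) *\<^sub>R (\<Sum>i'\<in>H. Eg i')) \<le> \<delta>"
    and \<sigma>_pos: "\<sigma> > 0"
    and A_sing: "\<forall>S. S \<subseteq> H \<and> card S = n - 2 * f \<longrightarrow>
        kth_singular_value (c - 1)
          (map (\<lambda>s. Eg s - (1 / real (n - 2 * f)) *\<^sub>R (\<Sum>s'\<in>S. Eg s')) (sorted_list_of_set S))
        \<ge> \<sigma>"
  shows
    "(\<forall>(g :: nat \<Rightarrow> 'v) (k :: nat) (u :: nat \<Rightarrow> 'v) (m :: 'v).
        orthonormal_cols k u \<longrightarrow>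
        (norm ((1 / real (card H)) *\<^sub>R (\<Sum>i\<in>H. proj_aff k u m (g i))
               - (1 / real (card H)) *\<^sub>R (\<Sum>i\<in>H. Eg i)))\<^sup>2
        \<le> 2 / real (card H) * (\<Sum>i\<in>H. (norm (g i - Eg i))\<^sup>2)
          + 4 * (1 / real (n - 2 * f) + \<delta>\<^sup>2 / \<sigma>\<^sup>2)
              * (trimmed_loss n f g k u m + (\<Sum>i\<in>H. (norm (g i - Eg i))\<^sup>2)))
     \<and>
     (\<forall>(M :: 'w measure) (g :: nat \<Rightarrow> 'w \<Rightarrow> 'v) (k :: 'w \<Rightarrow> nat) (u :: 'w \<Rightarrow> nat \<Rightarrow> 'v)
        (m :: 'w \<Rightarrow> 'v) (\<epsilon> :: real).
        prob_space M
        \<longrightarrow> (\<forall>i\<in>H. g i \<in> borel_measurable M)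
        \<longrightarrow> (\<lambda>\<omega>. trimmed_loss n f (\<lambda>i. g i \<omega>) (k \<omega>) (u \<omega>) (m \<omega>)) \<in> borel_measurable M
        \<longrightarrow> (\<forall>\<omega>\<in>space M. orthonormal_cols (k \<omega>) (u \<omega>))
        \<longrightarrow> (\<forall>i\<in>H. (\<integral>\<^sup>+\<omega>. ennreal ((norm (g i \<omega> - Eg i))\<^sup>2) \<partial>M) \<le> ennreal (\<epsilon>\<^sup>2))
        \<longrightarrow> (\<integral>\<^sup>+\<omega>. ennreal ((norm ((1 / real (card H)) *\<^sub>R (\<Sum>i\<in>H. proj_aff (k \<omega>) (u \<omega>) (m \<omega>) (g i \<omega>))
                  - (1 / real (card H)) *\<^sub>R (\<Sum>i\<in>H. Eg i)))\<^sup>2) \<partial>M)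
            \<le> ennreal (2 * \<epsilon>\<^sup>2)
              + ennreal (4 * (1 / real (n - 2 * f) + \<delta>\<^sup>2 / \<sigma>\<^sup>2))
                * ((\<integral>\<^sup>+\<omega>. ennreal (trimmed_loss n f (\<lambda>i. g i \<omega>) (k \<omega>) (u \<omega>) (m \<omega>)) \<partial>M)
                   + ennreal (real (card H) * \<epsilon>\<^sup>2)))"
proof (intro conjI allI impI)
  fix g :: "nat \<Rightarrow> 'v" and k :: nat and u :: "nat \<Rightarrow> 'v" and m :: 'v
  assume "orthonormal_cols k u"
  then show "(norm ((1 / real (card H)) *\<^sub>R (\<Sum>i\<in>H. proj_aff k u m (g i))
               - (1 / real (card H)) *\<^sub>R (\<Sum>i\<in>H. Eg i)))\<^sup>2
        \<le> 2 / real (card H) * (\<Sum>i\<in>H. (norm (g i - Eg i))\<^sup>2)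
          + 4 * (1 / real (n - 2 * f) + \<delta>\<^sup>2 / \<sigma>\<^sup>2)
              * (trimmed_loss n f g k u m + (\<Sum>i\<in>H. (norm (g i - Eg i))\<^sup>2))"
    by (rule part1[OF c2 nf H_sub B_card A_sub A_outer \<sigma>_pos A_sing])
next
  fix M :: "'w measure" and g :: "nat \<Rightarrow> 'w \<Rightarrow> 'v" and k :: "'w \<Rightarrow> nat" and u :: "'w \<Rightarrow> nat \<Rightarrow> 'v"
    and m :: "'w \<Rightarrow> 'v" and \<epsilon> :: real
  assume ps: "prob_space M" and gm: "\<forall>i\<in>H. g i \<in> borel_measurable M"
    and tlm: "(\<lambda>\<omega>. trimmed_loss n f (\<lambda>i. g i \<omega>) (k \<omega>) (u \<omega>) (m \<omega>)) \<in> borel_measurable M"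
    and on: "\<forall>\<omega>\<in>space M. orthonormal_cols (k \<omega>) (u \<omega>)"
    and Xi: "\<forall>i\<in>H. (\<integral>\<^sup>+\<omega>. ennreal ((norm (g i \<omega> - Eg i))\<^sup>2) \<partial>M) \<le> ennreal (\<epsilon>\<^sup>2)"
  have finH: "finite H" using H_sub finite_subset by blast
  have Xm: "\<forall>i\<in>H. (\<lambda>\<omega>. (norm (g i \<omega> - Eg i))\<^sup>2) \<in> borel_measurable M"
  proof
    fix i assume "i \<in> H"
    then have [measurable]: "g i \<in> borel_measurable M" using gm by blast
    show "(\<lambda>\<omega>. (norm (g i \<omega> - Eg i))\<^sup>2) \<in> borel_measurable M" by measurable
  qed
  have ah: "2 / real (card H) * real (card H) \<le> 2" by (cases "card H = 0") auto
  show "(\<integral>\<^sup>+\<omega>. ennreal ((norm ((1 / real (card H)) *\<^sub>R (\<Sum>i\<in>H. proj_aff (k \<omega>) (u \<omega>) (m \<omega>) (g i \<omega>))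
                  - (1 / real (card H)) *\<^sub>R (\<Sum>i\<in>H. Eg i)))\<^sup>2) \<partial>M)
            \<le> ennreal (2 * \<epsilon>\<^sup>2)
              + ennreal (4 * (1 / real (n - 2 * f) + \<delta>\<^sup>2 / \<sigma>\<^sup>2))
                * ((\<integral>\<^sup>+\<omega>. ennreal (trimmed_loss n f (\<lambda>i. g i \<omega>) (k \<omega>) (u \<omega>) (m \<omega>)) \<partial>M)
                   + ennreal (real (card H) * \<epsilon>\<^sup>2))"
  proof (rule integ_bound[OF finH _ _ ah _ Xm _ tlm _ Xi])
    show "\<forall>\<omega>\<in>space M. (norm ((1 / real (card H)) *\<^sub>R (\<Sum>i\<in>H. proj_aff (k \<omega>) (u \<omega>) (m \<omega>) (g i \<omega>))
                  - (1 / real (card H)) *\<^sub>R (\<Sum>i\<in>H. Eg i)))\<^sup>2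
        \<le> 2 / real (card H) * (\<Sum>i\<in>H. (norm (g i \<omega> - Eg i))\<^sup>2)
          + 4 * (1 / real (n - 2 * f) + \<delta>\<^sup>2 / \<sigma>\<^sup>2)
              * (trimmed_loss n f (\<lambda>i. g i \<omega>) (k \<omega>) (u \<omega>) (m \<omega>) + (\<Sum>i\<in>H. (norm (g i \<omega> - Eg i))\<^sup>2))"
    proof
      fix \<omega> assume "\<omega> \<in> space M"
      then have onw: "orthonormal_cols (k \<omega>) (u \<omega>)" using on by blast
      show "(norm ((1 / real (card H)) *\<^sub>R (\<Sum>i\<in>H. proj_aff (k \<omega>) (u \<omega>) (m \<omega>) (g i \<omega>))
                  - (1 / real (card H)) *\<^sub>R (\<Sum>i\<in>H. Eg i)))\<^sup>2
        \<le> 2 / real (card H) * (\<Sum>i\<in>H. (norm (g i \<omega> - Eg i))\<^sup>2)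
          + 4 * (1 / real (n - 2 * f) + \<delta>\<^sup>2 / \<sigma>\<^sup>2)
              * (trimmed_loss n f (\<lambda>i. g i \<omega>) (k \<omega>) (u \<omega>) (m \<omega>) + (\<Sum>i\<in>H. (norm (g i \<omega> - Eg i))\<^sup>2))"
        by (rule part1[OF c2 nf H_sub B_card A_sub A_outer \<sigma>_pos A_sing onw])
    qed
    show "0 \<le> 2 / real (card H)" by simp
    show "0 \<le> 4 * (1 / real (n - 2 * f) + \<delta>\<^sup>2 / \<sigma>\<^sup>2)" by simp
    show "\<forall>i \<omega>. 0 \<le> (norm (g i \<omega> - Eg i))\<^sup>2" by simp
    show "\<forall>\<omega>. 0 \<le> trimmed_loss n f (\<lambda>i. g i \<omega>) (k \<omega>) (u \<omega>) (m \<omega>)" using tl_nonneg by blast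
  qed
qed


end
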